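(* Let $G=(V,E)$ be a strongly connected digraph and $s\in V$. For all $v,w\in V$: if $v \leftrightarrow_{\mathrm{2e}} w$ then $T(v)=T(w)$ and $T^R(v)=T^R(w)$.
   Context: For a digraph $G=(V,E)$ and $s\in V$ with every vertex reachable from $s$, $G(s)$ is the flow graph with start vertex $s$; $u$ dominates $w$ if every path from $s$ to $w$ contains $u$; the dominator tree $D(s)$ is the rooted tree on $V$ with root $s$ in which $u$ is an ancestor of $w$ iff $u$ dominates $w$; $d(w)$ is the parent of $w\neq s$. An edge $(u,w)$ is a bridge of $G(s)$ if every path from $s$ to $w$ contains it (then $u=d(w)$). A vertex $w\neq s$ is marked if $(d(w),w)$ is a bridge of $G(s)$. Deleting from $D(s)$ all edges $(d(w),w)$ with $w$ marked decomposes $D(s)$ into a forest of subtrees, each rooted at $s$ or at a marked vertex; $T(v)$ denotes the subtree containing $v$, and $r_v$ its root. $G^R$ is $G$ with all edges reversed; $D^R(s)$ is the dominator tree of $G^R(s)$, marked vertices of $D^R(s)$ are defined via bridges of $G^R(s)$, and $T^R(v)$ is the subtree containing $v$ in the analogous decomposition of $D^R(s)$. For vertices $v,w$, $v \leftrightarrow_{\mathrm{2e}} w$ means $v=w$, or there are two edge-disjoint directed paths from $v$ to $w$ and two from $w$ to $v$. *)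

theory Defs
  imports Main
begin

definition is_path :: "('a \<times> 'a) set \<Rightarrow> 'a list \<Rightarrow> 'a \<Rightarrow> 'a \<Rightarrow> bool" where
  "is_path E xs u w \<longleftrightarrow> xs \<noteq> [] \<and> hd xs = u \<and> last xs = w \<and>
     (\<forall>i. Suc i < length xs \<longrightarrow> (xs ! i, xs ! Suc i) \<in> E)"

definition path_edges :: "'a list \<Rightarrow> ('a \<times> 'a) set" where
  "path_edges xs = set (zip xs (tl xs))"

definition strongly_connected :: "'a set \<Rightarrow> ('a \<times> 'a) set \<Rightarrow> bool" where
  "strongly_connected V E \<longleftrightarrow> (\<forall>u\<in>V. \<forall>v\<in>V. (u, v) \<in> E\<^sup>*)"

definition dominates :: "('a \<times> 'a) set \<Rightarrow> 'a \<Rightarrow> 'a \<Rightarrow> 'a \<Rightarrow> bool" where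
  "dominates E s u w \<longleftrightarrow> (\<forall>xs. is_path E xs s w \<longrightarrow> u \<in> set xs)"

text \<open>Parent d(w) of w \<noteq> s in the dominator tree D(s): the immediate dominator,
  i.e. the proper dominator of w that is dominated by all proper dominators of w.\<close>
definition idom :: "('a \<times> 'a) set \<Rightarrow> 'a \<Rightarrow> 'a \<Rightarrow> 'a" where
  "idom E s w = (THE u. u \<noteq> w \<and> dominates E s u w \<and>
       (\<forall>x. x \<noteq> w \<and> dominates E s x w \<longrightarrow> dominates E s x u))"

definition is_bridge :: "('a \<times> 'a) set \<Rightarrow> 'a \<Rightarrow> 'a \<Rightarrow> 'a \<Rightarrow> bool" where
  "is_bridge E s u w \<longleftrightarrow> (u, w) \<in> E \<and>
     (\<forall>xs. is_path E xs s w \<longrightarrow> (u, w) \<in> path_edges xs)"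

definition marked :: "('a \<times> 'a) set \<Rightarrow> 'a \<Rightarrow> 'a \<Rightarrow> bool" where
  "marked E s w \<longleftrightarrow> w \<noteq> s \<and> is_bridge E s (idom E s w) w"

definition forest_edges :: "'a set \<Rightarrow> ('a \<times> 'a) set \<Rightarrow> 'a \<Rightarrow> ('a \<times> 'a) set" where
  "forest_edges V E s = {(idom E s w, w) | w. w \<in> V \<and> w \<noteq> s \<and> \<not> marked E s w}"

definition subtree :: "'a set \<Rightarrow> ('a \<times> 'a) set \<Rightarrow> 'a \<Rightarrow> 'a \<Rightarrow> 'a set" where
  "subtree V E s v = {u. (v, u) \<in> (forest_edges V E s \<union> (forest_edges V E s)\<inverse>)\<^sup>*}"

definition two_edge_conn :: "('a \<times> 'a) set \<Rightarrow> 'a \<Rightarrow> 'a \<Rightarrow> bool" where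
  "two_edge_conn E v w \<longleftrightarrow> v = w \<or>
     ((\<exists>p q. is_path E p v w \<and> is_path E q v w \<and> path_edges p \<inter> path_edges q = {}) \<and>
      (\<exists>p q. is_path E p w v \<and> is_path E q w v \<and> path_edges p \<inter> path_edges q = {}))"

end

theory Submission imports Defs begin

lemma is_path_alt: "is_path E p u w \<longleftrightarrow> p \<noteq> [] \<and> hd p = u \<and> last p = w \<and> successively (\<lambda>x y. (x,y) \<in> E) p"
  unfolding is_path_def successively_conv_nth by blast

lemma path_hl: "is_path E p u w \<Longrightarrow> p \<noteq> [] \<and> hd p = u \<and> last p = w"
  unfolding is_path_def by blast

lemma pe_Nil[simp]: "path_edges [] = {}" by (simp add: path_edges_def)
lemma pe_single[simp]: "path_edges [x] = {}" by (simp add: path_edges_def)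
lemma pe_Cons2[simp]: "path_edges (x # y # zs) = insert (x,y) (path_edges (y # zs))"
  by (simp add: path_edges_def)

lemma pe_split: "path_edges (xs @ a # ys) = path_edges (xs @ [a]) \<union> path_edges (a # ys)"
  by (induction xs rule: induct_list012) auto

lemma pe_mem: "(a,b) \<in> path_edges p \<Longrightarrow> a \<in> set p \<and> b \<in> set (tl p)"
  by (auto simp: path_edges_def dest: set_zip_leftD set_zip_rightD)

lemma tl_sub: "x \<in> set (tl p) \<Longrightarrow> x \<in> set p"
  by (cases p) auto

lemma pe_E: "successively (\<lambda>x y. (x,y) \<in> E) p \<Longrightarrow> path_edges p \<subseteq> E"
  by (induction p rule: induct_list012) auto

lemma pe_E': "is_path E p u w \<Longrightarrow> path_edges p \<subseteq> E"
  using pe_E is_path_alt by metis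

lemma pe_distinct: "distinct p \<Longrightarrow> (a,b) \<in> path_edges p \<Longrightarrow> a \<noteq> b"
  by (induction p rule: induct_list012) auto

lemma succ_split: "successively P (xs @ a # ys) \<longleftrightarrow> successively P (xs @ [a]) \<and> successively P (a # ys)"
  using successively_append_iff[of P xs "a # ys"] successively_append_iff[of P xs "[a]"] by auto

lemma path_split: "is_path E (xs @ a # ys) u w \<longleftrightarrow> is_path E (xs @ [a]) u a \<and> is_path E (a # ys) a w"
proof -
  have h: "hd (xs @ a # ys) = hd (xs @ [a])" by (cases xs) simp_all
  have l: "last (xs @ a # ys) = last (a # ys)" "last (xs @ [a]) = a" "hd (a # ys) = a" by simp_all
  have n: "xs @ a # ys \<noteq> []" "xs @ [a] \<noteq> []" "a # ys \<noteq> []" by simp_all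
  have s: "successively (\<lambda>x y. (x,y) \<in> E) (xs @ a # ys) \<longleftrightarrow> successively (\<lambda>x y. (x,y) \<in> E) (xs @ [a]) \<and> successively (\<lambda>x y. (x,y) \<in> E) (a # ys)"
    by (rule succ_split)
  show ?thesis unfolding is_path_alt h l(1) l(2) l(3) using n s by blast
qed

lemma path_prefix: "is_path E (xs @ a # ys) u w \<Longrightarrow> is_path E (xs @ [a]) u a"
  by (rule conjunct1[OF path_split[THEN iffD1]])

lemma path_suffix: "is_path E (xs @ a # ys) u w \<Longrightarrow> is_path E (a # ys) a w"
  by (rule conjunct2[OF path_split[THEN iffD1]])

lemma path_concat:
  assumes "is_path E q u v" "is_path E (v # ys) v w"
  shows "is_path E (q @ ys) u w \<and> path_edges (q @ ys) = path_edges q \<union> path_edges (v # ys)"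
proof -
  have q: "q = butlast q @ [v]" using assms(1) unfolding is_path_def
    by (metis append_butlast_last_id)
  have e: "q @ ys = butlast q @ v # ys" by (subst q) simp
  show ?thesis unfolding e using assms path_split[of E "butlast q" v ys u w] pe_split[of "butlast q" v ys]
    q by metis
qed

lemma path_exists: "(u,x) \<in> E\<^sup>* \<Longrightarrow> \<exists>p. is_path E p u x"
proof (induction rule: rtrancl_induct)
  case base
  then show ?case by (rule exI[of _ "[u]"]) (simp add: is_path_def)
next
  case (step y z)
  then obtain p where "is_path E p u y" by blast
  moreover have "is_path E [y,z] y z" using step by (simp add: is_path_alt)
  ultimately show ?case using path_concat[of E p u y "[z]" z] by blast
qed

lemma distinct_path: "is_path E p u w \<Longrightarrow> \<exists>q. is_path E q u w \<and> distinct q"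
proof (induction "length p" arbitrary: p rule: less_induct)
  case less
  show ?case
  proof (cases "distinct p")
    case True then show ?thesis using less.prems by blast
  next
    case False
    then obtain xs y ys zs where p: "p = xs @ [y] @ ys @ [y] @ zs" using not_distinct_decomp by blast
    have "p = (xs @ y # ys) @ y # zs" using p by simp
    then have h2: "is_path E (y # zs) y w" using less.prems path_split by metis
    have "p = xs @ y # (ys @ y # zs)" using p by simp
    then have h1: "is_path E (xs @ [y]) u y" using less.prems path_split by metis
    have "is_path E (xs @ y # zs) u w" using path_split h1 h2 by metis
    moreover have "length (xs @ y # zs) < length p" using p by simp
    ultimately show ?thesis using less.hyps by blast
  qed
qed

lemma path_in_V: "is_path E p u w \<Longrightarrow> u \<in> V \<Longrightarrow> E \<subseteq> V \<times> V \<Longrightarrow> w \<in> V"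
proof (induction p arbitrary: u rule: induct_list012)
  case (3 x y zs)
  then have "is_path E (y # zs) y w" "y \<in> V" by (auto simp: is_path_alt)
  then show ?case using 3 by blast
qed (auto simp: is_path_def)

lemma rev_path: "is_path E p u w \<Longrightarrow> is_path (E\<inverse>) (rev p) w u"
  by (auto simp: is_path_alt hd_rev last_rev)

lemma pe_rev: "path_edges (rev p) = (path_edges p)\<inverse>"
proof (induction p rule: induct_list012)
  case (3 x y zs)
  have "rev (x # y # zs) = rev zs @ y # [x]" by simp
  then have "path_edges (rev (x # y # zs)) = path_edges (rev (y # zs)) \<union> {(y,x)}"
    using pe_split[of "rev zs" y "[x]"] by simp
  then show ?case using 3 by auto
qed auto

lemma dom_refl: "dominates E s u u"
  unfolding dominates_def using path_hl last_in_set by metis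

lemma dom_trans:
  assumes "dominates E s u d" "dominates E s d x" shows "dominates E s u x"
  unfolding dominates_def
proof (intro allI impI)
  fix p assume p: "is_path E p s x"
  then have "d \<in> set p" using assms(2) unfolding dominates_def by blast
  then obtain xs ys where pe: "p = xs @ d # ys" by (meson split_list)
  then have "is_path E (xs @ [d]) s d" using path_prefix[of E xs d ys s x] p pe by simp
  then have "u \<in> set (xs @ [d])" using assms(1) unfolding dominates_def by blast
  then show "u \<in> set p" using pe by auto
qed

lemma dom_antisym:
  assumes "dominates E s a b" "dominates E s b a" "is_path E p0 s b" shows "a = b"
proof (rule ccontr)
  assume ne: "a \<noteq> b"
  obtain p where p: "is_path E p s b" "distinct p" using distinct_path[OF assms(3)] by blast
  then have "a \<in> set p" using assms(1) unfolding dominates_def by blast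
  then obtain xs ys where pe: "p = xs @ a # ys" by (meson split_list)
  have "last p = b" using path_hl[OF p(1)] by blast
  then have bl: "b = last (a # ys)" using pe by simp
  have "ys \<noteq> []"
  proof
    assume "ys = []" then show False using bl ne by simp
  qed
  then have bys: "b \<in> set ys" using bl last_ConsR last_in_set by metis
  have "distinct (xs @ a # ys)" using p(2) pe by simp
  then have dd: "set xs \<inter> set (a # ys) = {}" "a \<notin> set ys" unfolding distinct_append by auto
  have bn: "b \<notin> set (xs @ [a])" using dd bys by auto
  have "is_path E (xs @ [a]) s a" using path_prefix[of E xs a ys s b] p(1) pe by simp
  then have "b \<in> set (xs @ [a])" using assms(2) unfolding dominates_def by blast
  then show False using bn by simp
qed

lemma dom_chain:
  assumes "is_path E (xs @ b # ys) s x" "distinct (xs @ b # ys)" "a \<in> set xs" "dominates E s a x"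
  shows "dominates E s a b"
  unfolding dominates_def
proof (intro allI impI)
  fix q assume q: "is_path E q s b"
  have "is_path E (b # ys) b x" using path_suffix[OF assms(1)] .
  then have "is_path E (q @ ys) s x" using path_concat[OF q] by blast
  then have "a \<in> set (q @ ys)" using assms(4) unfolding dominates_def by blast
  moreover have "a \<notin> set ys" using assms(2,3) by auto
  ultimately show "a \<in> set q" by auto
qed

lemma idom_ex1:
  assumes "is_path E p0 s x" "x \<noteq> s"
  shows "\<exists>!u. u \<noteq> x \<and> dominates E s u x \<and> (\<forall>y. y \<noteq> x \<and> dominates E s y x \<longrightarrow> dominates E s y u)"
proof -
  obtain p where p: "is_path E p s x" "distinct p" using distinct_path[OF assms(1)] by blast
  define xs where "xs = butlast p"
  have pxs: "p = xs @ [x]" using p(1) unfolding xs_def is_path_def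
    by (metis append_butlast_last_id)
  have hp: "hd p = s" using path_hl[OF p(1)] by blast
  have "xs \<noteq> []" using pxs hp assms(2) by (cases xs) auto
  then have sxs: "s \<in> set xs" using pxs hp by (cases xs) auto
  have "dominates E s s x" unfolding dominates_def using path_hl hd_in_set by metis
  then obtain ys u zs where xs: "xs = ys @ u # zs" "dominates E s u x"
      "\<forall>z\<in>set zs. \<not> dominates E s z x"
    using split_list_last_prop[of xs "\<lambda>z. dominates E s z x"] sxs by blast
  have pu: "p = ys @ u # (zs @ [x])" using pxs xs by simp
  have ux: "u \<noteq> x" using p(2) pxs xs by auto
  have pathu: "is_path E (ys @ [u]) s u" using path_prefix[of E ys u "zs @ [x]" s x] p(1) pu by simp
  have key: "\<forall>y. y \<noteq> x \<and> dominates E s y x \<longrightarrow> dominates E s y u"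
  proof (intro allI impI)
    fix y assume y: "y \<noteq> x \<and> dominates E s y x"
    then have "y \<in> set p" using p(1) unfolding dominates_def by blast
    then have "y \<in> set ys \<or> y = u" using pu y xs(3) by auto
    then show "dominates E s y u"
    proof
      assume "y \<in> set ys" then show ?thesis using dom_chain[of E ys u "zs @ [x]" s x y] p pu y by simp
    qed (simp add: dom_refl)
  qed
  show ?thesis
  proof (rule ex1I[of _ u])
    show "u \<noteq> x \<and> dominates E s u x \<and> (\<forall>y. y \<noteq> x \<and> dominates E s y x \<longrightarrow> dominates E s y u)"
      using ux xs(2) key by blast
  next
    fix u' assume u': "u' \<noteq> x \<and> dominates E s u' x \<and> (\<forall>y. y \<noteq> x \<and> dominates E s y x \<longrightarrow> dominates E s y u')"
    then have d1: "dominates E s u' u" using key by blast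
    have d2: "dominates E s u u'" using u' ux xs(2) by blast
    show "u' = u" using dom_antisym[OF d1 d2 pathu] .
  qed
qed

lemma idom_props:
  assumes "is_path E p0 s x" "x \<noteq> s"
  shows "idom E s x \<noteq> x \<and> dominates E s (idom E s x) x \<and>
    (\<forall>y. y \<noteq> x \<and> dominates E s y x \<longrightarrow> dominates E s y (idom E s x))"
  unfolding idom_def by (rule theI') (rule idom_ex1[OF assms])


definition K :: "('a \<times> 'a) set \<Rightarrow> 'a \<Rightarrow> 'a \<Rightarrow> ('a \<times> 'a) set" where
  "K E s x = {e. \<forall>p. is_path E p s x \<longrightarrow> e \<in> path_edges p}"

lemma K_sub:
  assumes "is_path E p0 s x" "x \<noteq> s"
  shows "K E s (idom E s x) \<subseteq> K E s x"
proof
  fix e assume e: "e \<in> K E s (idom E s x)"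
  show "e \<in> K E s x" unfolding K_def
  proof (intro CollectI allI impI)
    fix p assume p: "is_path E p s x"
    have "idom E s x \<in> set p" using idom_props[OF assms] p unfolding dominates_def by blast
    then obtain xs ys where pe: "p = xs @ idom E s x # ys" by (meson split_list)
    then have "is_path E (xs @ [idom E s x]) s (idom E s x)" using path_prefix[of E xs "idom E s x" ys s x] p pe by simp
    then have "e \<in> path_edges (xs @ [idom E s x])" using e unfolding K_def by blast
    then show "e \<in> path_edges p" using pe pe_split[of xs "idom E s x" ys] by auto
  qed
qed

lemma K_sup:
  assumes "is_path E p0 s x" "x \<noteq> s"
  shows "K E s x \<subseteq> insert (idom E s x, x) (K E s (idom E s x))"
proof
  fix e assume e: "e \<in> K E s x"
  define d where "d = idom E s x"
  note ip = idom_props[OF assms, folded d_def]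
  show "e \<in> insert (idom E s x, x) (K E s (idom E s x))"
  proof (cases "e = (d, x)")
    case True then show ?thesis by (simp add: d_def)
  next
    case ne: False
    obtain p where p: "is_path E p s x" "distinct p" using distinct_path[OF assms(1)] by blast
    have "d \<in> set p" using ip p unfolding dominates_def by blast
    then obtain xs ys where pe: "p = xs @ d # ys" by (meson split_list)
    have pdy: "is_path E (d # ys) d x" using path_suffix[of E xs d ys s x] p(1) pe by simp
    have notin: "e \<notin> path_edges (d # ys)"
    proof
      assume ein: "e \<in> path_edges (d # ys)"
      obtain a b where eab: "e = (a, b)" by fastforce
      have ab: "a \<in> set (d # ys)" "b \<in> set ys" using pe_mem[of a b "d # ys"] ein eab by auto
      have dis: "distinct (d # ys)" using p(2) pe by simp
      have "a \<noteq> b" using pe_distinct[OF dis] ein eab by blast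
      have "x = last (d # ys)" using path_hl[OF pdy] by simp
      have "\<exists>y. y \<in> set ys \<and> y \<noteq> x \<and> (y = a \<or> y = b)"
      proof (cases "b = x")
        case True
        then have "a \<noteq> d" using ne eab by auto
        then have "a \<in> set ys" using ab by auto
        moreover have "a \<noteq> x" using \<open>a \<noteq> b\<close> True by simp
        ultimately show ?thesis by blast
      next
        case False
        then have "b \<in> set ys \<and> b \<noteq> x \<and> (b = a \<or> b = b)" using ab by simp
        then show ?thesis by blast
      qed
      then obtain y where y: "y \<in> set ys" "y \<noteq> x" "y = a \<or> y = b" by blast
      have ydom: "dominates E s y x" unfolding dominates_def
      proof (intro allI impI)
        fix r assume r: "is_path E r s x"
        have "e \<in> path_edges r" using e r unfolding K_def by simp
        then have "(a,b) \<in> path_edges r" using eab by simp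
        then have m: "a \<in> set r \<and> b \<in> set (tl r)" by (rule pe_mem)
        then have "a \<in> set r" "b \<in> set r" using tl_sub[of b r] by auto
        then show "y \<in> set r" using y(3) by auto
      qed
      then have yd: "dominates E s y d" using ip y(2) by blast
      obtain ys1 ys2 where ys: "ys = ys1 @ y # ys2" using y(1) by (meson split_list)
      have p2: "p = (xs @ d # ys1) @ y # ys2" using pe ys by simp
      have dy: "dominates E s d y" using dom_chain[of E "xs @ d # ys1" y ys2 s x d] p p2 ip by simp
      have py: "is_path E ((xs @ d # ys1) @ [y]) s y" using path_prefix[of E "xs @ d # ys1" y ys2 s x] p(1) p2 by simp
      have "d = y" using dom_antisym[OF dy yd py] .
      then have "y = d" by simp
      then show False using dis y(1) by simp
    qed
    have "e \<in> K E s d" unfolding K_def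
    proof (intro CollectI allI impI)
      fix q assume q: "is_path E q s d"
      have "is_path E (q @ ys) s x \<and> path_edges (q @ ys) = path_edges q \<union> path_edges (d # ys)"
        using path_concat[OF q pdy] .
      then have "e \<in> path_edges q \<union> path_edges (d # ys)" using e unfolding K_def by blast
      then show "e \<in> path_edges q" using notin by blast
    qed
    then show ?thesis by (simp add: d_def)
  qed
qed


lemma marked_iff:
  assumes "is_path E p0 s x"
  shows "marked E s x \<longleftrightarrow> x \<noteq> s \<and> (idom E s x, x) \<in> K E s x"
proof
  assume "marked E s x" then show "x \<noteq> s \<and> (idom E s x, x) \<in> K E s x"
    unfolding marked_def is_bridge_def K_def by blast
next
  assume h: "x \<noteq> s \<and> (idom E s x, x) \<in> K E s x"
  then have "(idom E s x, x) \<in> path_edges p0" using assms unfolding K_def by blast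
  then have "(idom E s x, x) \<in> E" using pe_E'[OF assms] by blast
  then show "marked E s x" using h unfolding marked_def is_bridge_def K_def by blast
qed

lemma root:
  assumes EV: "E \<subseteq> V \<times> V" and sV: "s \<in> V"
  shows "is_path E p s x \<Longrightarrow> \<exists>r. (x, r) \<in> (forest_edges V E s \<union> (forest_edges V E s)\<inverse>)\<^sup>* \<and>
      K E s r = K E s x \<and> (r = s \<or> marked E s r) \<and> (\<exists>q. is_path E q s r)"
proof (induction x arbitrary: p rule: measure_induct_rule[where f="\<lambda>x. card {u. dominates E s u x}"])
  case (less x)
  show ?case
  proof (cases "x = s \<or> marked E s x")
    case True then show ?thesis using less.prems by blast
  next
    case False
    then have xs: "x \<noteq> s" and nm: "\<not> marked E s x" by auto
    define d where "d = idom E s x"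
    note ip = idom_props[OF less.prems xs, folded d_def]
    have xV: "x \<in> V" using path_in_V[OF less.prems sV EV] .
    have fe: "(d, x) \<in> forest_edges V E s" unfolding forest_edges_def d_def using xV xs nm by blast
    have "(d, x) \<notin> K E s x" using nm marked_iff[OF less.prems] xs d_def by blast
    then have Keq: "K E s x = K E s d" using K_sub[OF less.prems xs] K_sup[OF less.prems xs] d_def by blast
    have "d \<in> set p" using ip less.prems unfolding dominates_def by blast
    then obtain xs1 ys where pe: "p = xs1 @ d # ys" by (meson split_list)
    then have pd: "is_path E (xs1 @ [d]) s d" using path_prefix[of E xs1 d ys s x] less.prems pe by simp
    have dx: "dominates E s d x" using ip by blast
    have sub: "{u. dominates E s u d} \<subseteq> {u. dominates E s u x}"
    proof
      fix u assume "u \<in> {u. dominates E s u d}"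
      then have "dominates E s u d" by simp
      then show "u \<in> {u. dominates E s u x}" using dom_trans[OF _ dx] by simp
    qed
    have xnd: "x \<notin> {u. dominates E s u d}"
    proof
      assume "x \<in> {u. dominates E s u d}"
      then have "dominates E s x d" by simp
      then have "d = x" using dom_antisym[OF dx _ less.prems] by simp
      then show False using ip by simp
    qed
    have xx: "x \<in> {u. dominates E s u x}" by (simp add: dom_refl)
    have fin: "finite {u. dominates E s u x}"
    proof (rule finite_subset[of _ "set p"])
      show "{u. dominates E s u x} \<subseteq> set p" using less.prems unfolding dominates_def by blast
    qed simp
    have ps: "{u. dominates E s u d} \<subset> {u. dominates E s u x}" using sub xnd xx by blast
    have "card {u. dominates E s u d} < card {u. dominates E s u x}"
      using psubset_card_mono[OF fin ps] .
    then obtain r where r: "(d, r) \<in> (forest_edges V E s \<union> (forest_edges V E s)\<inverse>)\<^sup>*"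
      "K E s r = K E s d" "r = s \<or> marked E s r" "\<exists>q. is_path E q s r"
      using less.IH[OF _ pd] by blast
    have "(x, d) \<in> forest_edges V E s \<union> (forest_edges V E s)\<inverse>" using fe by blast
    then have "(x, r) \<in> (forest_edges V E s \<union> (forest_edges V E s)\<inverse>)\<^sup>*"
      using r(1) by (meson converse_rtrancl_into_rtrancl)
    then show ?thesis using r(2,3,4) Keq by auto
  qed
qed

lemma K_s: "K E s s = {}"
proof -
  have "is_path E [s] s s" by (simp add: is_path_def)
  then show ?thesis unfolding K_def by fastforce
qed

lemma root_unique:
  assumes "is_path E p1 s r1" "is_path E p2 s r2" "r1 = s \<or> marked E s r1" "r2 = s \<or> marked E s r2"
    "K E s r1 = K E s r2"
  shows "r1 = r2"
proof -
  have mk: "K E s r \<noteq> {}" if "marked E s r" "is_path E p s r" for r p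
    using marked_iff[OF that(2)] that(1) by blast
  show ?thesis
  proof (cases "r1 = s \<or> r2 = s")
    case True
    show ?thesis
    proof (cases "r1 = s")
      case r1s: True
      then have "K E s r2 = {}" using assms(5) K_s by metis
      then have "\<not> marked E s r2" using mk[OF _ assms(2)] by blast
      then show ?thesis using assms(4) r1s by simp
    next
      case False
      then have r2s: "r2 = s" using True by simp
      then have "K E s r1 = {}" using assms(5) K_s by metis
      then have "\<not> marked E s r1" using mk[OF _ assms(1)] by blast
      then show ?thesis using assms(3) r2s False by simp
    qed
  next
    case False
    then have m: "marked E s r1" "marked E s r2" using assms by auto
    have dm: "dominates E s a b" if "marked E s a" "is_path E pa s a" "K E s a = K E s b" for a b pa
      unfolding dominates_def
    proof (intro allI impI)
      fix q assume q: "is_path E q s b"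
      have "(idom E s a, a) \<in> K E s b" using marked_iff[OF that(2)] that by blast
      then have "(idom E s a, a) \<in> path_edges q" using q unfolding K_def by blast
      then show "a \<in> set q" using pe_mem[of "idom E s a" a q] tl_sub[of a q] by blast
    qed
    have d12: "dominates E s r1 r2" using dm[OF m(1) assms(1) assms(5)] .
    have d21: "dominates E s r2 r1" using dm[OF m(2) assms(2) assms(5)[symmetric]] .
    show ?thesis using dom_antisym[OF d12 d21 assms(2)] .
  qed
qed

lemma subtree_eq:
  assumes EV: "E \<subseteq> V \<times> V" and sV: "s \<in> V" and reach: "\<forall>x\<in>V. (s, x) \<in> E\<^sup>*"
    and vV: "v \<in> V" and wV: "w \<in> V" and Kvw: "K E s v = K E s w"
  shows "subtree V E s v = subtree V E s w"
proof -
  define S where "S = forest_edges V E s \<union> (forest_edges V E s)\<inverse>"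
  obtain pv where pv: "is_path E pv s v" using path_exists[of s v E] reach vV by blast
  obtain pw where pw: "is_path E pw s w" using path_exists[of s w E] reach wV by blast
  obtain r1 where r1: "(v, r1) \<in> S\<^sup>*" "K E s r1 = K E s v" "r1 = s \<or> marked E s r1" "\<exists>q. is_path E q s r1"
    using root[OF EV sV pv] S_def by blast
  obtain r2 where r2: "(w, r2) \<in> S\<^sup>*" "K E s r2 = K E s w" "r2 = s \<or> marked E s r2" "\<exists>q. is_path E q s r2"
    using root[OF EV sV pw] S_def by blast
  obtain q1 where q1: "is_path E q1 s r1" using r1(4) by blast
  obtain q2 where q2: "is_path E q2 s r2" using r2(4) by blast
  have "K E s r1 = K E s r2" using r1(2) r2(2) Kvw by simp
  then have "r1 = r2" using root_unique[OF q1 q2 r1(3) r2(3)] by blast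
  have symS: "S\<inverse> = S" unfolding S_def by auto
  have "(r2, w) \<in> S\<^sup>*" using rtrancl_converseI[OF r2(1)] symS by (simp add: rtrancl_converse)
  then have vw: "(v, w) \<in> S\<^sup>*" using r1(1) \<open>r1 = r2\<close> by simp
  then have wv: "(w, v) \<in> S\<^sup>*" using rtrancl_converseI[OF vw] symS by (simp add: rtrancl_converse)
  show ?thesis unfolding subtree_def S_def[symmetric]
    using vw wv by (auto intro: rtrancl_trans)
qed

lemma K_2ec_half:
  assumes "is_path E p1 w v" "is_path E p2 w v" "path_edges p1 \<inter> path_edges p2 = {}"
  shows "K E s v \<subseteq> K E s w"
proof
  fix e assume e: "e \<in> K E s v"
  show "e \<in> K E s w" unfolding K_def
  proof (intro CollectI allI impI)
    fix q assume q: "is_path E q s w"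
    have c: "e \<in> path_edges q" if "is_path E p w v" "e \<notin> path_edges p" for p
    proof -
      have "p \<noteq> []" "hd p = w" using path_hl[OF that(1)] by auto
      then have pp: "p = w # tl p" by (metis list.collapse)
      then have "is_path E (w # tl p) w v" using that(1) by simp
      then have "is_path E (q @ tl p) s v \<and> path_edges (q @ tl p) = path_edges q \<union> path_edges (w # tl p)"
        using path_concat[OF q] by blast
      then have "e \<in> path_edges q \<union> path_edges (w # tl p)" using e unfolding K_def by blast
      then have "e \<in> path_edges q \<union> path_edges p" using pp by simp
      then show ?thesis using that(2) by blast
    qed
    show "e \<in> path_edges q"
    proof (cases "e \<in> path_edges p1")
      case True
      then have "e \<notin> path_edges p2" using assms(3) by blast
      then show ?thesis using c[OF assms(2)] by blast
    next
      case False then show ?thesis using c[OF assms(1)] by blast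
    qed
  qed
qed

lemma K_2ec: assumes "two_edge_conn E v w" shows "K E s v = K E s w"
proof (cases "v = w")
  case False
  then obtain p q p' q' where a: "is_path E p v w" "is_path E q v w" "path_edges p \<inter> path_edges q = {}"
     "is_path E p' w v" "is_path E q' w v" "path_edges p' \<inter> path_edges q' = {}"
    using assms unfolding two_edge_conn_def by blast
  have "K E s v \<subseteq> K E s w" using K_2ec_half[OF a(4,5,6)] .
  moreover have "K E s w \<subseteq> K E s v" using K_2ec_half[OF a(1,2,3)] .
  ultimately show ?thesis by blast
qed simp

lemma two_edge_conn_rev: "two_edge_conn E v w \<Longrightarrow> two_edge_conn (E\<inverse>) v w"
  unfolding two_edge_conn_def
proof (elim disjE conjE exE)
  fix p q p' q'
  assume a: "is_path E p v w" "is_path E q v w" "path_edges p \<inter> path_edges q = {}"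
     "is_path E p' w v" "is_path E q' w v" "path_edges p' \<inter> path_edges q' = {}"
  have "is_path (E\<inverse>) (rev p') v w" "is_path (E\<inverse>) (rev q') v w"
       "is_path (E\<inverse>) (rev p) w v" "is_path (E\<inverse>) (rev q) w v"
    using rev_path[OF a(4)] rev_path[OF a(5)] rev_path[OF a(1)] rev_path[OF a(2)] by blast+
  moreover have "path_edges (rev p') \<inter> path_edges (rev q') = {}"
      "path_edges (rev p) \<inter> path_edges (rev q) = {}" using a(3,6) by (auto simp: pe_rev)
  ultimately show "v = w \<or> (\<exists>p q. is_path (E\<inverse>) p v w \<and> is_path (E\<inverse>) q v w \<and> path_edges p \<inter> path_edges q = {}) \<and>
      (\<exists>p q. is_path (E\<inverse>) p w v \<and> is_path (E\<inverse>) q w v \<and> path_edges p \<inter> path_edges q = {})"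
    by blast
qed simp

theorem mainTheorem5:
  fixes V :: "'a set" and E :: "('a \<times> 'a) set" and s :: 'a
  assumes "finite V" and "E \<subseteq> V \<times> V" and "s \<in> V"
    and "strongly_connected V E"
  shows "\<forall>v\<in>V. \<forall>w\<in>V. two_edge_conn E v w \<longrightarrow>
           subtree V E s v = subtree V E s w \<and>
           subtree V (E\<inverse>) s v = subtree V (E\<inverse>) s w"
proof (intro ballI impI conjI)
  fix v w assume vV: "v \<in> V" and wV: "w \<in> V" and t: "two_edge_conn E v w"
  have r1: "\<forall>x\<in>V. (s, x) \<in> E\<^sup>*" using assms(3,4) unfolding strongly_connected_def by blast
  have r2: "\<forall>x\<in>V. (s, x) \<in> (E\<inverse>)\<^sup>*" using assms(3,4) unfolding strongly_connected_def
    by (meson rtrancl_converseI)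
  have EV2: "E\<inverse> \<subseteq> V \<times> V" using assms(2) by blast
  show "subtree V E s v = subtree V E s w"
    using subtree_eq[OF assms(2,3) r1 vV wV K_2ec[OF t]] .
  show "subtree V (E\<inverse>) s v = subtree V (E\<inverse>) s w"
    using subtree_eq[OF EV2 assms(3) r2 vV wV K_2ec[OF two_edge_conn_rev[OF t]]] .
qed

end
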